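(* Every $SC^*$-$T_3$ space is an $SC^*$-$T_2$ space.
   Context: For $A\subseteq X$ in a topological space $X$: $A$ is semi-open if $A\subseteq cl(int(A))$, semi-closed if its complement is semi-open; $scl(A)$ is the smallest semi-closed set containing $A$. $A$ is $c^*$-open if $int(cl(A))\subseteq A\subseteq cl(int(A))$. $A$ is $SC^*$-closed if $scl(A)\subseteq U$ whenever $A\subseteq U$ and $U$ is $c^*$-open; $A$ is $SC^*$-open if $X\setminus A$ is $SC^*$-closed. $X$ is $SC^*$-regular if for every closed set $F$ and every point $x\notin F$ there exist disjoint $SC^*$-open sets $U,V$ with $F\subseteq U$ and $x\in V$. $X$ is $SC^*$-$T_1$ if for any distinct $x,y\in X$ there are $SC^*$-open sets $U,V$ with $x\in U$, $y\notin U$, $y\in V$, $x\notin V$. $X$ is $SC^*$-$T_2$ if any two distinct points have disjoint $SC^*$-open neighbourhoods. $X$ is $SC^*$-$T_3$ if it is both $SC^*$-regular and $SC^*$-$T_1$. *)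

theory Defs
  imports "HOL-Analysis.Analysis"
begin

definition semi_open :: "'a topology \<Rightarrow> 'a set \<Rightarrow> bool" where
  "semi_open X A \<longleftrightarrow> A \<subseteq> topspace X \<and> A \<subseteq> X closure_of (X interior_of A)"

definition semi_closed :: "'a topology \<Rightarrow> 'a set \<Rightarrow> bool" where
  "semi_closed X A \<longleftrightarrow> A \<subseteq> topspace X \<and> semi_open X (topspace X - A)"

definition scl :: "'a topology \<Rightarrow> 'a set \<Rightarrow> 'a set" where
  "scl X A = \<Inter> {F. semi_closed X F \<and> A \<subseteq> F}"

definition cstar_open :: "'a topology \<Rightarrow> 'a set \<Rightarrow> bool" where
  "cstar_open X A \<longleftrightarrow> A \<subseteq> topspace X \<and>
     X interior_of (X closure_of A) \<subseteq> A \<and> A \<subseteq> X closure_of (X interior_of A)"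

definition SCstar_closed :: "'a topology \<Rightarrow> 'a set \<Rightarrow> bool" where
  "SCstar_closed X A \<longleftrightarrow> A \<subseteq> topspace X \<and>
     (\<forall>U. A \<subseteq> U \<and> cstar_open X U \<longrightarrow> scl X A \<subseteq> U)"

definition SCstar_open :: "'a topology \<Rightarrow> 'a set \<Rightarrow> bool" where
  "SCstar_open X A \<longleftrightarrow> A \<subseteq> topspace X \<and> SCstar_closed X (topspace X - A)"

definition SCstar_regular :: "'a topology \<Rightarrow> bool" where
  "SCstar_regular X \<longleftrightarrow> (\<forall>F x. closedin X F \<and> x \<in> topspace X \<and> x \<notin> F \<longrightarrow>
     (\<exists>U V. SCstar_open X U \<and> SCstar_open X V \<and> U \<inter> V = {} \<and> F \<subseteq> U \<and> x \<in> V))"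

definition SCstar_T1 :: "'a topology \<Rightarrow> bool" where
  "SCstar_T1 X \<longleftrightarrow> (\<forall>x\<in>topspace X. \<forall>y\<in>topspace X. x \<noteq> y \<longrightarrow>
     (\<exists>U V. SCstar_open X U \<and> SCstar_open X V \<and> x \<in> U \<and> y \<notin> U \<and> y \<in> V \<and> x \<notin> V))"

definition SCstar_T2 :: "'a topology \<Rightarrow> bool" where
  "SCstar_T2 X \<longleftrightarrow> (\<forall>x\<in>topspace X. \<forall>y\<in>topspace X. x \<noteq> y \<longrightarrow>
     (\<exists>U V. SCstar_open X U \<and> SCstar_open X V \<and> x \<in> U \<and> y \<in> V \<and> U \<inter> V = {}))"

definition SCstar_T3 :: "'a topology \<Rightarrow> bool" where
  "SCstar_T3 X \<longleftrightarrow> SCstar_regular X \<and> SCstar_T1 X"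

end

theory Submission
  imports Defs
begin

lemma scl_sub: "A \<subseteq> topspace X \<Longrightarrow> scl X A \<subseteq> topspace X"
proof -
  assume A: "A \<subseteq> topspace X"
  have "semi_closed X (topspace X)" by (simp add: semi_closed_def semi_open_def)
  thus ?thesis unfolding scl_def using A by blast
qed

lemma single_open:
  assumes x: "x \<in> topspace X" and y: "y \<in> topspace X" and xy: "x \<noteq> y"
    and c: "x \<in> X closure_of {y}"
  shows "SCstar_open X {x}"
  unfolding SCstar_open_def SCstar_closed_def
proof (intro conjI allI impI)
  show "{x} \<subseteq> topspace X" using x by simp
  show "topspace X - {x} \<subseteq> topspace X" by (rule Diff_subset)
  fix U assume U1: "topspace X - {x} \<subseteq> U \<and> cstar_open X U"
  have sub: "topspace X - {x} \<subseteq> U" and co: "cstar_open X U" using U1 by simp_all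
  have Utop: "U \<subseteq> topspace X" and io: "X interior_of (X closure_of U) \<subseteq> U"
    using co unfolding cstar_open_def by simp_all
  have "x \<in> U"
  proof (rule ccontr)
    assume F: "x \<notin> U"
    have "y \<in> U" using sub y xy by blast
    hence "X closure_of {y} \<subseteq> X closure_of U" by (simp add: closure_of_mono)
    hence xc: "x \<in> X closure_of U" using c by (rule subsetD)
    have "topspace X \<subseteq> X closure_of U"
    proof
      fix z assume z: "z \<in> topspace X"
      show "z \<in> X closure_of U"
      proof (cases "z = x")
        case True then show ?thesis using xc by simp
      next
        case False
        hence "z \<in> U" using sub z by blast
        thus ?thesis using Utop closure_of_subset[OF Utop] by (rule_tac subsetD) 
      qed
    qed
    hence "X closure_of U = topspace X" using closure_of_subset_topspace[of X U] by (rule_tac equalityI)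
    hence "X interior_of (X closure_of U) = topspace X" by simp
    hence "x \<in> U" using io x by blast
    with F show False by simp
  qed
  hence "topspace X \<subseteq> U" using sub by blast 
  thus "scl X (topspace X - {x}) \<subseteq> U" using scl_sub[of "topspace X - {x}" X] by blast
qed
lemma reg_use:
  assumes R: "SCstar_regular X" and x: "x \<in> topspace X" and y: "y \<in> topspace X"
    and n: "x \<notin> X closure_of {y}"
  shows "\<exists>U V. SCstar_open X U \<and> SCstar_open X V \<and> x \<in> U \<and> y \<in> V \<and> U \<inter> V = {}"
proof -
  have cl: "closedin X (X closure_of {y})" by simp
  have "\<exists>U V. SCstar_open X U \<and> SCstar_open X V \<and> U \<inter> V = {} \<and> X closure_of {y} \<subseteq> U \<and> x \<in> V"
    using R cl x n unfolding SCstar_regular_def by blast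
  then obtain U V where U: "SCstar_open X U" and V: "SCstar_open X V" and d: "U \<inter> V = {}"
    and s: "X closure_of {y} \<subseteq> U" and xv: "x \<in> V" by blast
  have "y \<in> X closure_of {y}" using y closure_of_subset[of "{y}" X] by simp
  hence yu: "y \<in> U" by (rule subsetD[OF s])
  have "V \<inter> U = {}" using d by (simp add: Int_commute)
  thus ?thesis using U V xv yu by blast
qed

theorem theorem2p13:
  fixes X :: "'a topology"
  assumes "SCstar_T3 X"
  shows "SCstar_T2 X"
  unfolding SCstar_T2_def
proof (intro ballI impI)
  have R: "SCstar_regular X" using assms unfolding SCstar_T3_def by simp
  fix x y assume x: "x \<in> topspace X" and y: "y \<in> topspace X" and xy: "x \<noteq> y"
  show "\<exists>U V. SCstar_open X U \<and> SCstar_open X V \<and> x \<in> U \<and> y \<in> V \<and> U \<inter> V = {}"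
  proof (cases "x \<in> X closure_of {y}")
    case cx: True
    show ?thesis
    proof (cases "y \<in> X closure_of {x}")
      case True
      have a: "SCstar_open X {x}" using x y xy cx by (rule single_open)
      have "y \<noteq> x" using xy by simp
      hence b: "SCstar_open X {y}" using y x True by (intro single_open)
      have "{x} \<inter> {y} = {}" using xy by simp
      thus ?thesis using a b by blast
    next
      case False
      have "\<exists>U V. SCstar_open X U \<and> SCstar_open X V \<and> y \<in> U \<and> x \<in> V \<and> U \<inter> V = {}"
        using R y x False by (rule reg_use)
      then obtain U V where "SCstar_open X U" "SCstar_open X V" "y \<in> U" "x \<in> V" "U \<inter> V = {}"
        by blast
      moreover have "V \<inter> U = {}" using \<open>U \<inter> V = {}\<close> by (simp add: Int_commute)
      ultimately show ?thesis by blast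
    qed
  next
    case False
    show ?thesis using R x y False by (rule reg_use)
  qed
qed

end
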